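(* Let $g\in\mathscr{A}_3(\Pi)$ and let $(E_n)_{n\ge1}$ be an exhausting sequence of bounded subsets of $E$ such that $\lim_n\mathrm{tr}(\chi_{E_n}\Pi|g-1|^2\chi_{E_n^c}\Pi\chi_{E_n})=0$. Set $g_n=1+(g-1)\chi_{E_n}$. Then $L(g_n/g)\to0$ and $V(g_n/g)\to0$ as $n\to\infty$ (i.e. $g_n\to g$ in the topology $\mathscr{T}$).
   Context: $E$ is a locally compact complete separable metric space with $\sigma$-finite Borel measure $\mu$; $\Pi$ is a locally trace class orthogonal projection on $L^2(E,\mu)$ with kernel $\Pi(x,y)$ whose diagonal satisfies $\mathrm{tr}(\chi_B\Pi\chi_B)=\int_B\Pi(x,x)d\mu$. For Borel $f$, $L(f)=\int_E|f(x)-1|^3\Pi(x,x)d\mu(x)$ and $V(f)=\iint_{E^2}|f(x)-f(y)|^2|\Pi(x,y)|^2d\mu(x)d\mu(y)$. $\mathscr{A}_3(\Pi)$ is the set of positive Borel $g$ with $0<\inf g\le\sup g<\infty$, $L(g)<\infty$, $V(g)<\infty$, and for which some exhausting sequence of bounded sets $(E_n)$ satisfies $\lim_n\mathrm{tr}(\chi_{E_n}\Pi|g-1|^2\chi_{E_n^c}\Pi\chi_{E_n})=0$. The topology $\mathscr{T}$ on $\mathscr{A}_3(\Pi)$ is the one in which $g_n\to g$ iff $L(g_n/g)\to0$ and $V(g_n/g)\to0$. *)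

theory Defs
  imports "HOL-Analysis.Analysis"
begin

definition L2fun :: "'a measure \<Rightarrow> ('a \<Rightarrow> complex) \<Rightarrow> bool" where
  "L2fun M f \<longleftrightarrow> f \<in> borel_measurable M \<and> integrable M (\<lambda>x. (cmod (f x))\<^sup>2)"

definition kop :: "'a measure \<Rightarrow> ('a \<Rightarrow> 'a \<Rightarrow> complex) \<Rightarrow> ('a \<Rightarrow> complex) \<Rightarrow> 'a \<Rightarrow> complex" where
  "kop M K f = (\<lambda>x. LINT y|M. K x y * f y)"

definition projection_kernel :: "'a measure \<Rightarrow> ('a \<Rightarrow> 'a \<Rightarrow> complex) \<Rightarrow> bool" where
  "projection_kernel M K \<longleftrightarrow>
     (\<lambda>(x,y). K x y) \<in> borel_measurable (M \<Otimes>\<^sub>M M) \<and>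
     (\<forall>x. L2fun M (K x)) \<and>
     (\<forall>f. L2fun M f \<longrightarrow> L2fun M (kop M K f) \<and>
          (AE x in M. kop M K (kop M K f) x = kop M K f x)) \<and>
     (\<forall>f h. L2fun M f \<longrightarrow> L2fun M h \<longrightarrow>
          (LINT x|M. cnj (kop M K f x) * h x) = (LINT x|M. cnj (f x) * kop M K h x))"

text \<open>tr(chi_B Pi chi_B) = ||Pi chi_B||_HS^2 (as Pi is a self-adjoint idempotent).\<close>
definition tr_loc :: "'a measure \<Rightarrow> ('a \<Rightarrow> 'a \<Rightarrow> complex) \<Rightarrow> 'a set \<Rightarrow> ennreal" where
  "tr_loc M K B = (\<integral>\<^sup>+ y. indicator B y * (\<integral>\<^sup>+ x. ennreal ((cmod (K x y))\<^sup>2) \<partial>M) \<partial>M)"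

text \<open>tr(chi_A Pi |g-1|^2 chi_{A^c} Pi chi_A) = || |g-1| chi_{A^c} Pi chi_A ||_HS^2.\<close>
definition tail_trace :: "'a measure \<Rightarrow> ('a \<Rightarrow> 'a \<Rightarrow> complex) \<Rightarrow> ('a \<Rightarrow> real) \<Rightarrow> 'a set \<Rightarrow> ennreal" where
  "tail_trace M K g A = (\<integral>\<^sup>+ y. indicator A y *
      (\<integral>\<^sup>+ x. indicator (- A) x * ennreal ((g x - 1)\<^sup>2 * (cmod (K x y))\<^sup>2) \<partial>M) \<partial>M)"

definition Lfun :: "'a measure \<Rightarrow> ('a \<Rightarrow> 'a \<Rightarrow> complex) \<Rightarrow> ('a \<Rightarrow> real) \<Rightarrow> ennreal" where
  "Lfun M K f = (\<integral>\<^sup>+ x. ennreal (\<bar>f x - 1\<bar> ^ 3 * Re (K x x)) \<partial>M)"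

definition Vfun :: "'a measure \<Rightarrow> ('a \<Rightarrow> 'a \<Rightarrow> complex) \<Rightarrow> ('a \<Rightarrow> real) \<Rightarrow> ennreal" where
  "Vfun M K f = (\<integral>\<^sup>+ z. ennreal ((f (fst z) - f (snd z))\<^sup>2 * (cmod (K (fst z) (snd z)))\<^sup>2) \<partial>(M \<Otimes>\<^sub>M M))"

definition exhausting :: "(nat \<Rightarrow> 'a::metric_space set) \<Rightarrow> bool" where
  "exhausting En \<longleftrightarrow> incseq En \<and> (\<Union>n. En n) = UNIV \<and>
     (\<forall>n. bounded (En n) \<and> En n \<in> sets borel)"

definition A3 :: "'a::metric_space measure \<Rightarrow> ('a \<Rightarrow> 'a \<Rightarrow> complex) \<Rightarrow> ('a \<Rightarrow> real) set" where
  "A3 M K = {g. g \<in> borel_measurable borel \<and> (\<forall>x. g x > 0) \<and>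
      0 < (INF x. g x) \<and> bdd_below (range g) \<and> bdd_above (range g) \<and>
      Lfun M K g < \<infinity> \<and> Vfun M K g < \<infinity> \<and>
      (\<exists>En. exhausting En \<and> (\<lambda>n. tail_trace M K g (En n)) \<longlonglongrightarrow> 0)}"

end

theory Submission
  imports Defs
begin

locale kern = sigma_finite_measure M for M :: "'a::polish_space measure" +
  fixes K :: "'a \<Rightarrow> 'a \<Rightarrow> complex"
  assumes sM: "sets M = sets borel"
    and pk: "projection_kernel M K"
    and trfin: "\<And>B. bounded B \<Longrightarrow> B \<in> sets borel \<Longrightarrow> tr_loc M K B < \<infinity>"
begin

lemma PSF: "pair_sigma_finite M M"
  by (simp add: pair_sigma_finite_def sigma_finite_measure_axioms)

interpretation P: pair_sigma_finite M M by (rule PSF)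

lemma spM: "space M = UNIV"
  using sets_eq_imp_space_eq[OF sM] by simp

lemma Kmeas[measurable]: "(\<lambda>z. K (fst z) (snd z)) \<in> borel_measurable (M \<Otimes>\<^sub>M M)"
  using pk unfolding projection_kernel_def by (simp add: case_prod_beta')

lemma Kmeas'[measurable]: "(\<lambda>(x,y). K x y) \<in> borel_measurable (M \<Otimes>\<^sub>M M)"
  using pk unfolding projection_kernel_def by simp

lemma Kswap[measurable]: "(\<lambda>z. K (snd z) (fst z)) \<in> borel_measurable (M \<Otimes>\<^sub>M M)"
  using measurable_compose[OF measurable_Pair[OF measurable_snd measurable_fst] Kmeas] by simp

lemma Kdiag[measurable]: "(\<lambda>x. K x x) \<in> borel_measurable M"
  using measurable_compose[OF measurable_Pair[OF measurable_ident_sets[OF refl] measurable_ident_sets[OF refl]] Kmeas] by simp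

lemma cnj_meas[measurable]: "cnj \<in> borel_measurable borel"
  by (intro borel_measurable_continuous_onI continuous_on_cnj continuous_on_id)

lemma setsM: "B \<in> sets borel \<Longrightarrow> B \<in> sets M" using sM by simp


definition "S A \<longleftrightarrow> A \<in> sets M \<and> bounded A \<and> emeasure M A < \<infinity>"

lemma col_fin:
  assumes [measurable]: "A \<in> sets M" and bA: "bounded A"
  shows "(\<integral>\<^sup>+ z. indicator A (snd z) * ennreal ((cmod (K (fst z) (snd z)))\<^sup>2) \<partial>(M \<Otimes>\<^sub>M M)) < \<infinity>"
proof -
  have "(\<integral>\<^sup>+ z. indicator A (snd z) * ennreal ((cmod (K (fst z) (snd z)))\<^sup>2) \<partial>(M \<Otimes>\<^sub>M M))
      = (\<integral>\<^sup>+ y. (\<integral>\<^sup>+ x. indicator A y * ennreal ((cmod (K x y))\<^sup>2) \<partial>M) \<partial>M)"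
  proof -
    have m: "(\<lambda>z. indicator A (snd z) * ennreal ((cmod (K (fst z) (snd z)))\<^sup>2)) \<in> borel_measurable (M \<Otimes>\<^sub>M M)"
      by measurable
    show ?thesis using P.nn_integral_snd[OF m] by simp
  qed
  also have "\<dots> = (\<integral>\<^sup>+ y. indicator A y * (\<integral>\<^sup>+ x. ennreal ((cmod (K x y))\<^sup>2) \<partial>M) \<partial>M)"
    by (intro nn_integral_cong nn_integral_cmult) measurable
  also have "\<dots> = tr_loc M K A" unfolding tr_loc_def ..
  also have "\<dots> < \<infinity>" using trfin[OF bA] sM assms(1) by simp
  finally show ?thesis .
qed

lemma row_fin:
  assumes [measurable]: "A \<in> sets M" and bA: "bounded A"
  shows "(\<integral>\<^sup>+ z. indicator A (fst z) * ennreal ((cmod (K (snd z) (fst z)))\<^sup>2) \<partial>(M \<Otimes>\<^sub>M M)) < \<infinity>"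
proof -
  have "(\<integral>\<^sup>+ z. indicator A (fst z) * ennreal ((cmod (K (snd z) (fst z)))\<^sup>2) \<partial>(M \<Otimes>\<^sub>M M))
      = (\<integral>\<^sup>+ x. (\<integral>\<^sup>+ y. indicator A x * ennreal ((cmod (K y x))\<^sup>2) \<partial>M) \<partial>M)"
  proof -
    have m: "(\<lambda>z. indicator A (fst z) * ennreal ((cmod (K (snd z) (fst z)))\<^sup>2)) \<in> borel_measurable (M \<Otimes>\<^sub>M M)"
      by measurable
    show ?thesis using nn_integral_fst[OF m] by simp
  qed
  also have "\<dots> = (\<integral>\<^sup>+ x. indicator A x * (\<integral>\<^sup>+ y. ennreal ((cmod (K y x))\<^sup>2) \<partial>M) \<partial>M)"
    by (intro nn_integral_cong nn_integral_cmult) measurable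
  also have "\<dots> = tr_loc M K A" unfolding tr_loc_def ..
  also have "\<dots> < \<infinity>" using trfin[OF bA] sM assms(1) by simp
  finally show ?thesis .
qed

lemma rect_int:
  assumes "S A" "S B" and F[measurable]: "F \<in> borel_measurable (M \<Otimes>\<^sub>M M)"
    and Fb: "\<And>z. cmod (F z) \<le> cmod (K (fst z) (snd z)) + cmod (K (snd z) (fst z))"
  shows "integrable (M \<Otimes>\<^sub>M M) (\<lambda>z. indicator (B \<times> A) z *\<^sub>R F z)"
proof -
  have [measurable]: "A \<in> sets M" "B \<in> sets M" and bd: "bounded A" "bounded B"
    and fin: "emeasure M A < \<infinity>" "emeasure M B < \<infinity>" using assms unfolding S_def by auto
  define r where "r z = 2 * indicator (B \<times> A) z + indicator A (snd z) * (cmod (K (fst z) (snd z)))\<^sup>2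
     + indicator B (fst z) * (cmod (K (snd z) (fst z)))\<^sup>2" for z
  have le: "ennreal (norm (indicator (B \<times> A) z *\<^sub>R F z)) \<le> ennreal (r z)" for z
  proof (rule ennreal_leI)
    have k: "k \<le> 1 + k\<^sup>2" for k :: real
    proof (cases "k \<le> 1")
      case True then show ?thesis using zero_le_power2[of k] by linarith
    next
      case False then have "1 * k \<le> k * k" by (intro mult_right_mono) auto
      then show ?thesis by (simp add: power2_eq_square)
    qed
    show "norm (indicator (B \<times> A) z *\<^sub>R F z) \<le> r z"
      using Fb[of z] k[of "cmod (K (fst z) (snd z))"] k[of "cmod (K (snd z) (fst z))"]
      unfolding r_def by (cases z) (auto simp: indicator_def)
  qed
  have "(\<integral>\<^sup>+ z. ennreal (r z) \<partial>(M \<Otimes>\<^sub>M M)) =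
     (\<integral>\<^sup>+ z. 2 * indicator (B \<times> A) z \<partial>(M \<Otimes>\<^sub>M M)) +
     (\<integral>\<^sup>+ z. indicator A (snd z) * ennreal ((cmod (K (fst z) (snd z)))\<^sup>2) \<partial>(M \<Otimes>\<^sub>M M)) +
     (\<integral>\<^sup>+ z. indicator B (fst z) * ennreal ((cmod (K (snd z) (fst z)))\<^sup>2) \<partial>(M \<Otimes>\<^sub>M M))"
  proof -
    have BA[measurable]: "B \<times> A \<in> sets (M \<Otimes>\<^sub>M M)" by simp
    have m1: "(\<lambda>z. 2 * indicator (B \<times> A) z :: ennreal) \<in> borel_measurable (M \<Otimes>\<^sub>M M)" by measurable
    have m2: "(\<lambda>z. indicator A (snd z) * ennreal ((cmod (K (fst z) (snd z)))\<^sup>2)) \<in> borel_measurable (M \<Otimes>\<^sub>M M)" by measurable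
    have m3: "(\<lambda>z. indicator B (fst z) * ennreal ((cmod (K (snd z) (fst z)))\<^sup>2)) \<in> borel_measurable (M \<Otimes>\<^sub>M M)" by measurable
    have "(\<integral>\<^sup>+ z. ennreal (r z) \<partial>(M \<Otimes>\<^sub>M M)) = (\<integral>\<^sup>+ z. (2 * indicator (B \<times> A) z
       + indicator A (snd z) * ennreal ((cmod (K (fst z) (snd z)))\<^sup>2))
       + indicator B (fst z) * ennreal ((cmod (K (snd z) (fst z)))\<^sup>2) \<partial>(M \<Otimes>\<^sub>M M))"
      unfolding r_def by (intro nn_integral_cong) (auto simp: indicator_def ennreal_plus add_nonneg_nonneg)
    also have "\<dots> = (\<integral>\<^sup>+ z. (2 * indicator (B \<times> A) z
       + indicator A (snd z) * ennreal ((cmod (K (fst z) (snd z)))\<^sup>2)) \<partial>(M \<Otimes>\<^sub>M M)) +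
     (\<integral>\<^sup>+ z. indicator B (fst z) * ennreal ((cmod (K (snd z) (fst z)))\<^sup>2) \<partial>(M \<Otimes>\<^sub>M M))"
      by (rule nn_integral_add) (use m1 m2 m3 in measurable)
    also have "(\<integral>\<^sup>+ z. (2 * indicator (B \<times> A) z
       + indicator A (snd z) * ennreal ((cmod (K (fst z) (snd z)))\<^sup>2)) \<partial>(M \<Otimes>\<^sub>M M)) = 
       (\<integral>\<^sup>+ z. 2 * indicator (B \<times> A) z \<partial>(M \<Otimes>\<^sub>M M)) +
     (\<integral>\<^sup>+ z. indicator A (snd z) * ennreal ((cmod (K (fst z) (snd z)))\<^sup>2) \<partial>(M \<Otimes>\<^sub>M M))"
      by (rule nn_integral_add[OF m1 m2])
    finally show ?thesis .
  qed
  also have "\<dots> < \<infinity>"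
  proof -
    have "(\<integral>\<^sup>+ z. 2 * indicator (B \<times> A) z \<partial>(M \<Otimes>\<^sub>M M)) = 2 * (emeasure M B * emeasure M A)"
      by (simp add: nn_integral_cmult emeasure_pair_measure_Times)
    also have "\<dots> < \<infinity>" using fin by (simp add: ennreal_mult_less_top)
    finally show ?thesis using col_fin[of A] row_fin[of B] bd by simp
  qed
  finally have "(\<integral>\<^sup>+ z. ennreal (norm (indicator (B \<times> A) z *\<^sub>R F z)) \<partial>(M \<Otimes>\<^sub>M M)) < \<infinity>"
    using nn_integral_mono[of "M \<Otimes>\<^sub>M M", OF le] by (meson le_less_trans)
  then show ?thesis by (intro integrableI_bounded) measurable
qed

lemma L2ind: assumes "S A" shows "L2fun M (indicator A :: 'a \<Rightarrow> complex)"
proof -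
  have [measurable]: "A \<in> sets M" and fin: "emeasure M A < \<infinity>" using assms unfolding S_def by auto
  have "(\<lambda>x. (cmod (indicator A x :: complex))\<^sup>2) = indicator A"
    by (auto simp: indicator_def)
  moreover have "integrable M (indicator A :: 'a \<Rightarrow> real)"
    using fin by (simp add: integrable_indicator_iff)
  ultimately show ?thesis unfolding L2fun_def by simp
qed

definition "D z = cnj (K (fst z) (snd z)) - K (snd z) (fst z)"

lemma Dmeas[measurable]: "D \<in> borel_measurable (M \<Otimes>\<^sub>M M)"
  unfolding D_def by measurable

lemma sa_rect:
  assumes SA: "S A" and SB: "S B"
  shows "integral\<^sup>L (M \<Otimes>\<^sub>M M) (\<lambda>z. indicator (B \<times> A) z *\<^sub>R D z) = 0"
proof -
  have sa: "(LINT x|M. cnj (kop M K f x) * h x) = (LINT x|M. cnj (f x) * kop M K h x)"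
    if "L2fun M f" "L2fun M h" for f h
    using pk that unfolding projection_kernel_def by blast
  define f1 where "f1 z = indicator (B \<times> A) z *\<^sub>R cnj (K (fst z) (snd z))" for z
  define f2 where "f2 z = indicator (B \<times> A) z *\<^sub>R K (snd z) (fst z)" for z
  have int1: "integrable (M \<Otimes>\<^sub>M M) f1" unfolding f1_def
    by (rule rect_int[OF SA SB]; (measurable | simp))
  have int2: "integrable (M \<Otimes>\<^sub>M M) f2" unfolding f2_def
    by (rule rect_int[OF SA SB]; (measurable | simp))
  have "(LINT x|M. cnj (kop M K (indicator A) x) * indicator B x) = (LINT x|M. LINT y|M. f1 (x,y))"
  proof (rule Bochner_Integration.integral_cong[OF refl])
    fix x
    have "cnj (kop M K (indicator A) x) * indicator B x = (LINT y|M. cnj (K x y * indicator A y)) * indicator B x"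
      by (simp only: kop_def Bochner_Integration.integral_cnj)
    also have "\<dots> = (LINT y|M. cnj (K x y * indicator A y) * indicator B x)" by simp
    also have "\<dots> = (LINT y|M. f1 (x,y))"
      by (rule Bochner_Integration.integral_cong[OF refl]) (auto simp: f1_def indicator_def)
    finally show "cnj (kop M K (indicator A) x) * indicator B x = (LINT y|M. f1 (x,y))" .
  qed
  also have "\<dots> = integral\<^sup>L (M \<Otimes>\<^sub>M M) f1" by (rule P.integral_fst'[OF int1])
  finally have L: "(LINT x|M. cnj (kop M K (indicator A) x) * indicator B x) = integral\<^sup>L (M \<Otimes>\<^sub>M M) f1" .
  have "(LINT x|M. cnj (indicator A x) * kop M K (indicator B) x) = (LINT x|M. LINT y|M. f2 (y,x))"
  proof (rule Bochner_Integration.integral_cong[OF refl])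
    fix x
    have "cnj (indicator A x) * kop M K (indicator B) x = indicator A x * (LINT y|M. K x y * indicator B y)"
      unfolding kop_def by (simp add: indicator_def)
    also have "\<dots> = (LINT y|M. indicator A x * (K x y * indicator B y))" by simp
    also have "\<dots> = (LINT y|M. f2 (y,x))"
      by (rule Bochner_Integration.integral_cong[OF refl]) (auto simp: f2_def indicator_def)
    finally show "cnj (indicator A x) * kop M K (indicator B) x = (LINT y|M. f2 (y,x))" .
  qed
  also have "\<dots> = integral\<^sup>L (M \<Otimes>\<^sub>M M) f2"
    using P.integral_snd[of "\<lambda>x y. f2 (x,y)"] int2 by simp
  finally have R: "(LINT x|M. cnj (indicator A x) * kop M K (indicator B) x) = integral\<^sup>L (M \<Otimes>\<^sub>M M) f2" .
  have "integral\<^sup>L (M \<Otimes>\<^sub>M M) (\<lambda>z. indicator (B \<times> A) z *\<^sub>R D z) = integral\<^sup>L (M \<Otimes>\<^sub>M M) (\<lambda>z. f1 z - f2 z)"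
    by (rule Bochner_Integration.integral_cong[OF refl]) (simp add: f1_def f2_def D_def scaleR_diff_right)
  also have "\<dots> = integral\<^sup>L (M \<Otimes>\<^sub>M M) f1 - integral\<^sup>L (M \<Otimes>\<^sub>M M) f2"
    by (rule Bochner_Integration.integral_diff[OF int1 int2])
  also have "\<dots> = 0" using sa[OF L2ind[OF SA] L2ind[OF SB]] L R by simp
  finally show ?thesis .
qed

lemma S_sub: "S A \<Longrightarrow> a \<in> sets M \<Longrightarrow> S (a \<inter> A)"
  unfolding S_def
  by (meson Int_lower2 bounded_subset emeasure_mono le_less_trans sets.Int)

lemma intDR: assumes "S A0" "S B0"
  shows "integrable (M \<Otimes>\<^sub>M M) (\<lambda>z. indicator (B0 \<times> A0) z *\<^sub>R D z)"
  by (rule rect_int[OF assms]) (measurable, auto simp: D_def intro: order_trans[OF norm_triangle_ineq4])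

lemma sa_sets:
  assumes SA: "S A0" and SB: "S B0" and C: "C \<in> sets (M \<Otimes>\<^sub>M M)"
  shows "integral\<^sup>L (M \<Otimes>\<^sub>M M) (\<lambda>z. indicator C z *\<^sub>R (indicator (B0 \<times> A0) z *\<^sub>R D z)) = 0"
proof -
  define DR where "DR z = indicator (B0 \<times> A0) z *\<^sub>R D z" for z
  have iDR: "integrable (M \<Otimes>\<^sub>M M) DR" unfolding DR_def by (rule intDR[OF SA SB])
  have iC: "integrable (M \<Otimes>\<^sub>M M) (\<lambda>z. indicator C z *\<^sub>R DR z)" if "C \<in> sets (M \<Otimes>\<^sub>M M)" for C
    by (rule integrable_mult_indicator[OF that iDR])
  have C': "C \<in> sigma_sets (space M \<times> space M) {a \<times> b | a b. a \<in> sets M \<and> b \<in> sets M}"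
    using C sets_pair_measure by metis
  have "integral\<^sup>L (M \<Otimes>\<^sub>M M) (\<lambda>z. indicator C z *\<^sub>R DR z) = 0"
  proof (rule sigma_sets_induct_disjoint[OF Int_stable_pair_measure_generator pair_measure_closed C',
      where P="\<lambda>C. integral\<^sup>L (M \<Otimes>\<^sub>M M) (\<lambda>z. indicator C z *\<^sub>R DR z) = 0"])
    fix X assume "X \<in> {a \<times> b | a b. a \<in> sets M \<and> b \<in> sets M}"
    then obtain a b where X: "X = a \<times> b" and ab: "a \<in> sets M" "b \<in> sets M" by blast
    have "integral\<^sup>L (M \<Otimes>\<^sub>M M) (\<lambda>z. indicator X z *\<^sub>R DR z)
        = integral\<^sup>L (M \<Otimes>\<^sub>M M) (\<lambda>z. indicator ((a \<inter> B0) \<times> (b \<inter> A0)) z *\<^sub>R D z)"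
      unfolding X DR_def by (rule Bochner_Integration.integral_cong[OF refl]) (auto simp: indicator_def)
    also have "\<dots> = 0" by (rule sa_rect[OF S_sub[OF SA ab(2)] S_sub[OF SB ab(1)]])
    finally show "integral\<^sup>L (M \<Otimes>\<^sub>M M) (\<lambda>z. indicator X z *\<^sub>R DR z) = 0" .
  next
    show "integral\<^sup>L (M \<Otimes>\<^sub>M M) (\<lambda>z. indicator {} z *\<^sub>R DR z) = 0" by simp
  next
    fix X assume compl: "X \<in> sigma_sets (space M \<times> space M) {a \<times> b | a b. a \<in> sets M \<and> b \<in> sets M}"
      "integral\<^sup>L (M \<Otimes>\<^sub>M M) (\<lambda>z. indicator X z *\<^sub>R DR z) = 0"
    have Xs: "X \<in> sets (M \<Otimes>\<^sub>M M)" using compl(1) sets_pair_measure by metis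
    have "integral\<^sup>L (M \<Otimes>\<^sub>M M) (\<lambda>z. indicator (space M \<times> space M - X) z *\<^sub>R DR z)
        = integral\<^sup>L (M \<Otimes>\<^sub>M M) (\<lambda>z. DR z - indicator X z *\<^sub>R DR z)"
      by (rule Bochner_Integration.integral_cong[OF refl]) (auto simp: indicator_def spM)
    also have "\<dots> = integral\<^sup>L (M \<Otimes>\<^sub>M M) DR - integral\<^sup>L (M \<Otimes>\<^sub>M M) (\<lambda>z. indicator X z *\<^sub>R DR z)"
      by (rule Bochner_Integration.integral_diff[OF iDR iC[OF Xs]])
    also have "integral\<^sup>L (M \<Otimes>\<^sub>M M) DR = 0"
      using sa_rect[OF SA SB] unfolding DR_def .
    finally show "integral\<^sup>L (M \<Otimes>\<^sub>M M) (\<lambda>z. indicator (space M \<times> space M - X) z *\<^sub>R DR z) = 0" using compl(2) by simp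
  next
    fix X :: "nat \<Rightarrow> ('a \<times> 'a) set"
    assume union: "disjoint_family X" "range X \<subseteq> sigma_sets (space M \<times> space M) {a \<times> b | a b. a \<in> sets M \<and> b \<in> sets M}"
      "\<And>i. integral\<^sup>L (M \<Otimes>\<^sub>M M) (\<lambda>z. indicator (X i) z *\<^sub>R DR z) = 0"
    have Xs: "X i \<in> sets (M \<Otimes>\<^sub>M M)" for i using union(2) sets_pair_measure by (metis range_subsetD)
    have Us: "(\<Union>i. X i) \<in> sets (M \<Otimes>\<^sub>M M)" using Xs by blast
    have fin: "integral\<^sup>L (M \<Otimes>\<^sub>M M) (\<lambda>z. indicator (\<Union>i<n. X i) z *\<^sub>R DR z) = 0" for n
    proof (induction n)
      case 0 then show ?case by simp
    next
      case (Suc n)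
      have disj: "(\<Union>i<n. X i) \<inter> X n = {}"
      proof -
        have "X i \<inter> X n = {}" if "i < n" for i
          using union(1) that unfolding disjoint_family_on_def by auto
        then show ?thesis by blast
      qed
      have "integral\<^sup>L (M \<Otimes>\<^sub>M M) (\<lambda>z. indicator (\<Union>i<Suc n. X i) z *\<^sub>R DR z)
         = integral\<^sup>L (M \<Otimes>\<^sub>M M) (\<lambda>z. indicator (\<Union>i<n. X i) z *\<^sub>R DR z + indicator (X n) z *\<^sub>R DR z)"
      proof (rule Bochner_Integration.integral_cong[OF refl])
        fix z
        have "(\<Union>i<Suc n. X i) = (\<Union>i<n. X i) \<union> X n" by (auto simp: lessThan_Suc)
        then show "indicator (\<Union>i<Suc n. X i) z *\<^sub>R DR z = indicator (\<Union>i<n. X i) z *\<^sub>R DR z + indicator (X n) z *\<^sub>R DR z"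
          using disj by (auto simp: indicator_def)
      qed
      also have "\<dots> = integral\<^sup>L (M \<Otimes>\<^sub>M M) (\<lambda>z. indicator (\<Union>i<n. X i) z *\<^sub>R DR z) + integral\<^sup>L (M \<Otimes>\<^sub>M M) (\<lambda>z. indicator (X n) z *\<^sub>R DR z)"
        by (rule Bochner_Integration.integral_add[OF iC iC]) (use Xs in auto)
      finally show ?case using Suc union(3)[of n] by simp
    qed
    have "(\<lambda>n. integral\<^sup>L (M \<Otimes>\<^sub>M M) (\<lambda>z. indicator (\<Union>i<n. X i) z *\<^sub>R DR z)) \<longlonglongrightarrow>
        integral\<^sup>L (M \<Otimes>\<^sub>M M) (\<lambda>z. indicator (\<Union>i. X i) z *\<^sub>R DR z)"
    proof (rule integral_dominated_convergence[where w="\<lambda>z. norm (DR z)"])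
      show "(\<lambda>z. indicator (\<Union>i. X i) z *\<^sub>R DR z) \<in> borel_measurable (M \<Otimes>\<^sub>M M)"
        using iC[OF Us] by auto
      show "(\<lambda>z. indicator (\<Union>i<n. X i) z *\<^sub>R DR z) \<in> borel_measurable (M \<Otimes>\<^sub>M M)" for n
        using iC[of "\<Union>i<n. X i"] Xs by auto
      show "integrable (M \<Otimes>\<^sub>M M) (\<lambda>z. norm (DR z))" using iDR by simp
      show "AE z in M \<Otimes>\<^sub>M M. (\<lambda>n. indicator (\<Union>i<n. X i) z *\<^sub>R DR z) \<longlonglongrightarrow> indicator (\<Union>i. X i) z *\<^sub>R DR z"
        by (intro AE_I2 tendsto_scaleR LIMSEQ_indicator_UN tendsto_const)
      show "AE z in M \<Otimes>\<^sub>M M. norm (indicator (\<Union>i<n. X i) z *\<^sub>R DR z) \<le> norm (DR z)" for n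
        by (intro AE_I2) (auto simp: indicator_def)
    qed
    then show "integral\<^sup>L (M \<Otimes>\<^sub>M M) (\<lambda>z. indicator (\<Union>i. X i) z *\<^sub>R DR z) = 0" using fin by (simp add: LIMSEQ_const_iff)
  qed
  then show ?thesis unfolding DR_def .
qed

lemma AE_zero_from_sets:
  fixes f :: "_ \<Rightarrow> real"
  assumes f: "integrable N f" and Z: "\<And>C. C \<in> sets N \<Longrightarrow> integral\<^sup>L N (\<lambda>z. indicator C z * f z) = 0"
  shows "AE z in N. f z = 0"
proof -
  have fm[measurable]: "f \<in> borel_measurable N" using f by auto
  define C1 where "C1 = {z\<in>space N. 0 < f z}"
  define C2 where "C2 = {z\<in>space N. f z < 0}"
  have [measurable]: "C1 \<in> sets N" "C2 \<in> sets N" unfolding C1_def C2_def by measurable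
  have i1: "integrable N (\<lambda>z. indicator C1 z * f z)"
    using integrable_real_mult_indicator[of C1 N f] f by (simp add: mult.commute)
  have i2: "integrable N (\<lambda>z. - (indicator C2 z * f z))"
    using integrable_real_mult_indicator[of C2 N f] f by (simp add: mult.commute)
  have "AE z in N. indicator C1 z * f z = 0"
    using integral_nonneg_eq_0_iff_AE[OF i1] Z[of C1] by (auto simp: C1_def indicator_def)
  moreover have "AE z in N. - (indicator C2 z * f z) = 0"
    using integral_nonneg_eq_0_iff_AE[OF i2] Z[of C2] by (auto simp: C2_def indicator_def)
  ultimately show ?thesis
    by (rule AE_mp[OF _ AE_mp[OF _ AE_I2]], auto simp: C1_def C2_def indicator_def split: if_splits)
qed

lemma AE_herm_rect:
  assumes SA: "S A0" and SB: "S B0"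
  shows "AE z in M \<Otimes>\<^sub>M M. z \<in> B0 \<times> A0 \<longrightarrow> D z = 0"
proof -
  define DR where "DR z = indicator (B0 \<times> A0) z *\<^sub>R D z" for z
  have iDR: "integrable (M \<Otimes>\<^sub>M M) DR" unfolding DR_def by (rule intDR[OF SA SB])
  have Z: "integral\<^sup>L (M \<Otimes>\<^sub>M M) (\<lambda>z. indicator C z *\<^sub>R DR z) = 0" if "C \<in> sets (M \<Otimes>\<^sub>M M)" for C
    unfolding DR_def by (rule sa_sets[OF SA SB that])
  have iC: "integrable (M \<Otimes>\<^sub>M M) (\<lambda>z. indicator C z *\<^sub>R DR z)" if "C \<in> sets (M \<Otimes>\<^sub>M M)" for C
    by (rule integrable_mult_indicator[OF that iDR])
  have "AE z in M \<Otimes>\<^sub>M M. Re (DR z) = 0"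
  proof (rule AE_zero_from_sets)
    show "integrable (M \<Otimes>\<^sub>M M) (\<lambda>z. Re (DR z))" using iDR by auto
    fix C assume C: "C \<in> sets (M \<Otimes>\<^sub>M M)"
    have "integral\<^sup>L (M \<Otimes>\<^sub>M M) (\<lambda>z. indicator C z * Re (DR z)) = integral\<^sup>L (M \<Otimes>\<^sub>M M) (\<lambda>z. Re (indicator C z *\<^sub>R DR z))"
      by simp
    also have "\<dots> = Re (integral\<^sup>L (M \<Otimes>\<^sub>M M) (\<lambda>z. indicator C z *\<^sub>R DR z))"
      by (rule integral_Re[OF iC[OF C]])
    finally show "integral\<^sup>L (M \<Otimes>\<^sub>M M) (\<lambda>z. indicator C z * Re (DR z)) = 0" using Z[OF C] by simp
  qed
  moreover have "AE z in M \<Otimes>\<^sub>M M. Im (DR z) = 0"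
  proof (rule AE_zero_from_sets)
    show "integrable (M \<Otimes>\<^sub>M M) (\<lambda>z. Im (DR z))" using iDR by auto
    fix C assume C: "C \<in> sets (M \<Otimes>\<^sub>M M)"
    have "integral\<^sup>L (M \<Otimes>\<^sub>M M) (\<lambda>z. indicator C z * Im (DR z)) = integral\<^sup>L (M \<Otimes>\<^sub>M M) (\<lambda>z. Im (indicator C z *\<^sub>R DR z))"
      by simp
    also have "\<dots> = Im (integral\<^sup>L (M \<Otimes>\<^sub>M M) (\<lambda>z. indicator C z *\<^sub>R DR z))"
      by (rule integral_Im[OF iC[OF C]])
    finally show "integral\<^sup>L (M \<Otimes>\<^sub>M M) (\<lambda>z. indicator C z * Im (DR z)) = 0" using Z[OF C] by simp
  qed
  ultimately show ?thesis
    by eventually_elim (auto simp: DR_def complex_eq_iff)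
qed

lemma AE_herm: "AE z in M \<Otimes>\<^sub>M M. cmod (K (fst z) (snd z)) = cmod (K (snd z) (fst z))"
proof -
  obtain A :: "nat \<Rightarrow> 'a set" where A: "range A \<subseteq> sets M" "(\<Union>i. A i) = space M" "\<And>i. emeasure M (A i) \<noteq> \<infinity>"
    using sigma_finite by blast
  define F where "F p = A (fst p) \<inter> ball undefined (real (snd p))" for p :: "nat \<times> nat"
  have SF: "S (F p)" for p
  proof -
    have "ball undefined (real (snd p)) \<in> sets M" using sM by simp
    moreover have "emeasure M (F p) \<le> emeasure M (A (fst p))"
      unfolding F_def using A(1) by (intro emeasure_mono) auto
    moreover have "A (fst p) \<in> sets M" using A(1) by auto
    moreover have "emeasure M (A (fst p)) < \<infinity>" using A(3) by (simp add: less_top)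
    moreover have "bounded (F p)" unfolding F_def by (rule bounded_subset[OF bounded_ball]) auto
    ultimately show ?thesis unfolding S_def F_def by auto
  qed
  have cover: "\<exists>p. x \<in> F p" for x
  proof -
    obtain i where "x \<in> A i" using A(2) spM by auto
    moreover obtain n :: nat where "dist undefined x < real n" using reals_Archimedean2 by blast
    ultimately show ?thesis unfolding F_def by (intro exI[of _ "(i, n)"]) auto
  qed
  have "AE z in M \<Otimes>\<^sub>M M. \<forall>p q. z \<in> F p \<times> F q \<longrightarrow> D z = 0"
    apply (subst AE_all_countable, intro allI)
    apply (subst AE_all_countable, intro allI)
    apply (rule AE_herm_rect[OF SF SF])
    done
  then show ?thesis
  proof (rule AE_mp[OF _ AE_I2], safe)
    fix z assume H: "\<forall>p q. z \<in> F p \<times> F q \<longrightarrow> D z = 0"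
    obtain p q where "fst z \<in> F p" "snd z \<in> F q" using cover by blast
    then have "z \<in> F p \<times> F q" by (cases z) auto
    then have "D z = 0" using H by blast
    then have "K (snd z) (fst z) = cnj (K (fst z) (snd z))" unfolding D_def by simp
    then show "cmod (K (fst z) (snd z)) = cmod (K (snd z) (fst z))" by simp
  qed
qed

lemma dec_lim:
  fixes u :: "nat \<Rightarrow> 'b \<Rightarrow> ennreal"
  assumes dec: "\<And>n x. u (Suc n) x \<le> u n x" and um: "\<And>n. u n \<in> borel_measurable N"
    and fin: "(\<integral>\<^sup>+ x. u 0 x \<partial>N) < \<infinity>" and ev: "\<And>x. \<exists>n. u n x = 0"
  shows "(\<lambda>n. \<integral>\<^sup>+ x. u n x \<partial>N) \<longlonglongrightarrow> 0"
proof -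
  have ds: "decseq u" by (intro decseq_SucI le_funI dec)
  have d2: "decseq (\<lambda>n. \<integral>\<^sup>+ x. u n x \<partial>N)"
    by (intro decseq_SucI nn_integral_mono dec)
  have e1: "(INF n. \<integral>\<^sup>+ x. u n x \<partial>N) = (\<integral>\<^sup>+ x. (INF n. u n x) \<partial>N)"
    by (rule nn_integral_monotone_convergence_INF_decseq[OF ds um fin, symmetric])
  have e2: "(INF n. u n x) = 0" for x
  proof -
    obtain n where n: "u n x = 0" using ev by blast
    have "(INF n. u n x) \<le> u n x" by (rule INF_lower) simp
    then show ?thesis using n by simp
  qed
  have "(INF n. \<integral>\<^sup>+ x. u n x \<partial>N) = 0" unfolding e1 e2 by simp
  then show ?thesis using LIMSEQ_INF[OF d2] by simp
qed
lemma ennreal_mult_le_aux: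
  fixes a a' r :: real
  assumes "0 \<le> a" "a \<le> a'"
  shows "ennreal (a * r) \<le> ennreal (a' * r)"
proof (cases "0 \<le> r")
  case True then show ?thesis using assms by (intro ennreal_leI mult_right_mono) auto
next
  case False then have "a * r \<le> 0" using assms by (simp add: mult_nonneg_nonpos)
  then show ?thesis by (simp add: ennreal_neg)
qed

context
  fixes g :: "'a \<Rightarrow> real" and En :: "nat \<Rightarrow> 'a set" and m :: real
  assumes gm[measurable]: "g \<in> borel_measurable M" and mpos: "0 < m" and gge: "\<And>x. m \<le> g x"
    and Lg: "Lfun M K g < \<infinity>" and Vg: "Vfun M K g < \<infinity>"
    and Ens[measurable]: "\<And>n. En n \<in> sets M" and Einc: "incseq En" and Ecov: "\<And>x. \<exists>n. x \<in> En n"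
    and tt: "(\<lambda>n. tail_trace M K g (En n)) \<longlonglongrightarrow> 0"
begin

lemma Encomp[measurable]: "- En n \<in> sets M"
  using spM sets.compl_sets[OF Ens[of n]] by (simp add: Compl_eq_Diff_UNIV)

definition "c = 1 / m"

lemma cpos: "0 < c" unfolding c_def using mpos by simp

lemma gpos: "0 < g x" using mpos gge[of x] by linarith

lemma inv_le: "1 / g x \<le> c" unfolding c_def using mpos gge[of x] by (intro divide_left_mono) auto

lemma gnz: "g x \<noteq> 0" using gpos[of x] by simp

lemma fn_eq: "(1 + (g x - 1) * indicator (En n) x) / g x = (if x \<in> En n then 1 else 1 / g x)"
  using gpos[of x] by (auto simp: indicator_def)

lemma b1: "\<bar>1 / g x - 1\<bar> \<le> c * \<bar>g x - 1\<bar>"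
proof -
  have "\<bar>1 / g x - 1\<bar> = \<bar>g x - 1\<bar> * (1 / g x)" using gpos[of x]
    by (simp add: field_simps abs_div abs_minus_commute)
  also have "\<dots> \<le> \<bar>g x - 1\<bar> * c" by (intro mult_left_mono inv_le) auto
  finally show ?thesis by (simp add: mult.commute)
qed

lemma b1sq: "(1 / g x - 1)\<^sup>2 \<le> c\<^sup>2 * (g x - 1)\<^sup>2"
proof -
  have "(1 / g x - 1)\<^sup>2 = \<bar>1 / g x - 1\<bar>\<^sup>2" by simp
  also have "\<dots> \<le> (c * \<bar>g x - 1\<bar>)\<^sup>2" by (intro power_mono b1) auto
  finally show ?thesis by (simp add: power_mult_distrib)
qed

lemma b2sq: "(1 / g x - 1 / g y)\<^sup>2 \<le> c ^ 4 * (g x - g y)\<^sup>2"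
proof -
  have "(1 / g x - 1 / g y)\<^sup>2 = (g x - g y)\<^sup>2 * ((1 / g x)\<^sup>2 * (1 / g y)\<^sup>2)" using gpos[of x] gpos[of y]
    by (simp add: field_simps power2_eq_square)
  also have "\<dots> \<le> (g x - g y)\<^sup>2 * (c\<^sup>2 * c\<^sup>2)"
    using gpos[of x] gpos[of y] inv_le[of x] inv_le[of y]
    by (intro mult_left_mono mult_mono power_mono) auto
  also have "\<dots> = c ^ 4 * (g x - g y)\<^sup>2" by (simp add: power2_eq_square power4_eq_xxxx algebra_simps)
  finally show ?thesis .
qed

lemma L_part: "(\<lambda>n. Lfun M K (\<lambda>x. (1 + (g x - 1) * indicator (En n) x) / g x)) \<longlonglongrightarrow> 0"
proof -
  define u where "u n x = indicator (- En n) x * ennreal (\<bar>1 / g x - 1\<bar> ^ 3 * Re (K x x))" for n x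
  have eq: "Lfun M K (\<lambda>x. (1 + (g x - 1) * indicator (En n) x) / g x) = (\<integral>\<^sup>+ x. u n x \<partial>M)" for n
    unfolding Lfun_def u_def by (intro nn_integral_cong) (simp add: fn_eq indicator_def gnz)
  have "(\<lambda>n. \<integral>\<^sup>+ x. u n x \<partial>M) \<longlonglongrightarrow> 0"
  proof (rule dec_lim)
    fix n x
    have "En n \<subseteq> En (Suc n)" using Einc by (simp add: incseq_Suc_iff)
    then have "indicator (- En (Suc n)) x \<le> (indicator (- En n) x :: ennreal)"
      by (auto simp: indicator_def)
    then show "u (Suc n) x \<le> u n x" unfolding u_def by (intro mult_right_mono) auto
  next
    show "u n \<in> borel_measurable M" for n unfolding u_def by measurable
  next
    fix x obtain n where "x \<in> En n" using Ecov by blast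
    then show "\<exists>n. u n x = 0" unfolding u_def by (intro exI[of _ n]) auto
  next
    have "(\<integral>\<^sup>+ x. u 0 x \<partial>M) \<le> (\<integral>\<^sup>+ x. ennreal (c ^ 3) * ennreal (\<bar>g x - 1\<bar> ^ 3 * Re (K x x)) \<partial>M)"
    proof (rule nn_integral_mono)
      fix x
      have "u 0 x \<le> ennreal (\<bar>1 / g x - 1\<bar> ^ 3 * Re (K x x))"
        unfolding u_def by (auto simp: indicator_def)
      also have "\<dots> \<le> ennreal ((c ^ 3 * \<bar>g x - 1\<bar> ^ 3) * Re (K x x))"
      proof (rule ennreal_mult_le_aux)
        show "\<bar>1 / g x - 1\<bar> ^ 3 \<le> c ^ 3 * \<bar>g x - 1\<bar> ^ 3"
          using power_mono[OF b1[of x], of 3] by (simp add: power_mult_distrib)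
      qed auto
      also have "\<dots> = ennreal (c ^ 3) * ennreal (\<bar>g x - 1\<bar> ^ 3 * Re (K x x))"
        using cpos by (simp add: ennreal_mult' mult.assoc)
      finally show "u 0 x \<le> ennreal (c ^ 3) * ennreal (\<bar>g x - 1\<bar> ^ 3 * Re (K x x))" .
    qed
    also have "\<dots> = ennreal (c ^ 3) * Lfun M K g"
      unfolding Lfun_def by (rule nn_integral_cmult) measurable
    also have "\<dots> < \<infinity>" using Lg by (simp add: ennreal_mult_less_top)
    finally show "(\<integral>\<^sup>+ x. u 0 x \<partial>M) < \<infinity>" .
  qed
  then show ?thesis unfolding eq .
qed

lemma V_part: "(\<lambda>n. Vfun M K (\<lambda>x. (1 + (g x - 1) * indicator (En n) x) / g x)) \<longlonglongrightarrow> 0"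
proof -
  define k where "k z = (cmod (K (fst z) (snd z)))\<^sup>2" for z
  have km[measurable]: "k \<in> borel_measurable (M \<Otimes>\<^sub>M M)" unfolding k_def by measurable
  define P where "P n z = indicator (- En n) (fst z) * (indicator (- En n) (snd z) * ennreal ((g (fst z) - g (snd z))\<^sup>2 * k z))" for n z
  define S where "S n z = indicator (En n) (snd z) * (indicator (- En n) (fst z) * ennreal ((g (fst z) - 1)\<^sup>2 * k z))" for n z
  define T where "T n z = indicator (En n) (fst z) * (indicator (- En n) (snd z) * ennreal ((g (snd z) - 1)\<^sup>2 * k z))" for n z
  have Pm[measurable]: "P n \<in> borel_measurable (M \<Otimes>\<^sub>M M)" for n unfolding P_def by measurable
  have Sm[measurable]: "S n \<in> borel_measurable (M \<Otimes>\<^sub>M M)" for n unfolding S_def by measurable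
  have Tm[measurable]: "T n \<in> borel_measurable (M \<Otimes>\<^sub>M M)" for n unfolding T_def by measurable
  define B where "B n = ennreal (c ^ 4) * (\<integral>\<^sup>+ z. P n z \<partial>(M \<Otimes>\<^sub>M M)) + ennreal (c\<^sup>2) * (\<integral>\<^sup>+ z. S n z \<partial>(M \<Otimes>\<^sub>M M))
     + ennreal (c\<^sup>2) * (\<integral>\<^sup>+ z. T n z \<partial>(M \<Otimes>\<^sub>M M))" for n
  have kge: "0 \<le> k z" for z unfolding k_def by simp
  have pw: "ennreal ((((1 + (g (fst z) - 1) * indicator (En n) (fst z)) / g (fst z)) -
           ((1 + (g (snd z) - 1) * indicator (En n) (snd z)) / g (snd z)))\<^sup>2 * k z)
       \<le> ennreal (c ^ 4) * P n z + ennreal (c\<^sup>2) * S n z + ennreal (c\<^sup>2) * T n z" for n z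
  proof (cases "fst z \<in> En n"; cases "snd z \<in> En n")
    assume "fst z \<in> En n" "snd z \<in> En n"
    then show ?thesis by (simp add: fn_eq gnz)
  next
    assume a: "fst z \<in> En n" "snd z \<notin> En n"
    have "ennreal ((1 - 1 / g (snd z))\<^sup>2 * k z) \<le> ennreal ((c\<^sup>2 * (g (snd z) - 1)\<^sup>2) * k z)"
      using b1sq[of "snd z"] kge[of z] by (intro ennreal_leI mult_right_mono) (auto simp: power2_commute)
    then show ?thesis using a cpos kge[of z]
      by (simp add: fn_eq gnz T_def P_def S_def ennreal_mult mult.assoc)
  next
    assume a: "fst z \<notin> En n" "snd z \<in> En n"
    have "ennreal ((1 / g (fst z) - 1)\<^sup>2 * k z) \<le> ennreal ((c\<^sup>2 * (g (fst z) - 1)\<^sup>2) * k z)"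
      using b1sq[of "fst z"] kge[of z] by (intro ennreal_leI mult_right_mono) auto
    then show ?thesis using a cpos kge[of z]
      by (simp add: fn_eq gnz T_def P_def S_def ennreal_mult mult.assoc)
  next
    assume a: "fst z \<notin> En n" "snd z \<notin> En n"
    have "ennreal ((1 / g (fst z) - 1 / g (snd z))\<^sup>2 * k z) \<le> ennreal ((c ^ 4 * (g (fst z) - g (snd z))\<^sup>2) * k z)"
      using b2sq[of "fst z" "snd z"] kge[of z] by (intro ennreal_leI mult_right_mono) auto
    then show ?thesis using a cpos kge[of z]
      by (simp add: fn_eq gnz T_def P_def S_def ennreal_mult mult.assoc)
  qed
  have VleB: "Vfun M K (\<lambda>x. (1 + (g x - 1) * indicator (En n) x) / g x) \<le> B n" for n
  proof -
    have "Vfun M K (\<lambda>x. (1 + (g x - 1) * indicator (En n) x) / g x)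
      \<le> (\<integral>\<^sup>+ z. ennreal (c ^ 4) * P n z + ennreal (c\<^sup>2) * S n z + ennreal (c\<^sup>2) * T n z \<partial>(M \<Otimes>\<^sub>M M))"
      unfolding Vfun_def by (rule nn_integral_mono) (use pw in \<open>simp add: k_def\<close>)
    also have "\<dots> = B n" unfolding B_def
      by (simp add: nn_integral_add nn_integral_cmult)
    finally show ?thesis .
  qed
  have Seq: "(\<integral>\<^sup>+ z. S n z \<partial>(M \<Otimes>\<^sub>M M)) = tail_trace M K g (En n)" for n
  proof -
    have "(\<integral>\<^sup>+ z. S n z \<partial>(M \<Otimes>\<^sub>M M)) = (\<integral>\<^sup>+ y. (\<integral>\<^sup>+ x. S n (x, y) \<partial>M) \<partial>M)"
      by (rule P.nn_integral_snd[symmetric]) measurable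
    also have "\<dots> = tail_trace M K g (En n)" unfolding tail_trace_def S_def k_def
      apply (rule nn_integral_cong)
      apply simp
      apply (rule nn_integral_cmult)
      apply measurable
      done
    finally show ?thesis .
  qed
  have Teq: "(\<integral>\<^sup>+ z. T n z \<partial>(M \<Otimes>\<^sub>M M)) = tail_trace M K g (En n)" for n
  proof -
    define T' where "T' z = indicator (En n) (fst z) * (indicator (- En n) (snd z) * ennreal ((g (snd z) - 1)\<^sup>2 * (cmod (K (snd z) (fst z)))\<^sup>2))" for z
    have T'm: "T' \<in> borel_measurable (M \<Otimes>\<^sub>M M)" unfolding T'_def by measurable
    have "(\<integral>\<^sup>+ z. T n z \<partial>(M \<Otimes>\<^sub>M M)) = (\<integral>\<^sup>+ z. T' z \<partial>(M \<Otimes>\<^sub>M M))"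
      by (rule nn_integral_cong_AE) (use AE_herm in \<open>eventually_elim, simp add: T_def T'_def k_def\<close>)
    also have "\<dots> = (\<integral>\<^sup>+ x. (\<integral>\<^sup>+ y. T' (x, y) \<partial>M) \<partial>M)"
      by (rule nn_integral_fst[OF T'm, symmetric])
    also have "\<dots> = tail_trace M K g (En n)" unfolding tail_trace_def T'_def
      apply (rule nn_integral_cong)
      apply simp
      apply (rule nn_integral_cmult)
      apply measurable
      done
    finally show ?thesis .
  qed
  have Plim: "(\<lambda>n. \<integral>\<^sup>+ z. P n z \<partial>(M \<Otimes>\<^sub>M M)) \<longlonglongrightarrow> 0"
  proof (rule dec_lim)
    fix n and z :: "'a \<times> 'a"
    have "En n \<subseteq> En (Suc n)" using Einc by (simp add: incseq_Suc_iff)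
    then show "P (Suc n) z \<le> P n z" unfolding P_def
      by (auto simp: indicator_def)
  next
    show "P n \<in> borel_measurable (M \<Otimes>\<^sub>M M)" for n by (rule Pm)
  next
    fix z :: "'a \<times> 'a" obtain n where "fst z \<in> En n" using Ecov by blast
    then show "\<exists>n. P n z = 0" unfolding P_def by (intro exI[of _ n]) auto
  next
    have "(\<integral>\<^sup>+ z. P 0 z \<partial>(M \<Otimes>\<^sub>M M)) \<le> Vfun M K g"
      unfolding Vfun_def P_def k_def by (rule nn_integral_mono) (auto simp: indicator_def)
    then show "(\<integral>\<^sup>+ z. P 0 z \<partial>(M \<Otimes>\<^sub>M M)) < \<infinity>" using Vg by (meson le_less_trans)
  qed
  have "B \<longlonglongrightarrow> ennreal (c ^ 4) * 0 + ennreal (c\<^sup>2) * 0 + ennreal (c\<^sup>2) * 0"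
    unfolding B_def Seq Teq
    by (intro tendsto_add ennreal_tendsto_cmult Plim tt) auto
  then have Blim: "B \<longlonglongrightarrow> 0" by simp
  show ?thesis
    by (rule tendsto_sandwich[of "\<lambda>_. 0" _ _ B]) (use VleB Blim in auto)
qed

end

end

theorem lemma7p6:
  fixes M :: "'a::polish_space measure" and K :: "'a \<Rightarrow> 'a \<Rightarrow> complex"
    and g :: "'a \<Rightarrow> real" and En :: "nat \<Rightarrow> 'a set"
  assumes "locally_compact_space (euclidean :: 'a topology)"
    and "sets M = sets borel" and "sigma_finite_measure M"
    and "projection_kernel M K"
    and "\<And>B. bounded B \<Longrightarrow> B \<in> sets borel \<Longrightarrow>
           tr_loc M K B = (\<integral>\<^sup>+ x. indicator B x * ennreal (Re (K x x)) \<partial>M)"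
    and "\<And>B. bounded B \<Longrightarrow> B \<in> sets borel \<Longrightarrow> tr_loc M K B < \<infinity>"
    and "g \<in> A3 M K"
    and "exhausting En"
    and "(\<lambda>n. tail_trace M K g (En n)) \<longlonglongrightarrow> 0"
  shows "(\<lambda>n. Lfun M K (\<lambda>x. (1 + (g x - 1) * indicator (En n) x) / g x)) \<longlonglongrightarrow> 0
       \<and> (\<lambda>n. Vfun M K (\<lambda>x. (1 + (g x - 1) * indicator (En n) x) / g x)) \<longlonglongrightarrow> 0"
proof -
  interpret kern M K
    using assms(2,3,4,6) unfolding kern_def kern_axioms_def by blast
  have gA: "g \<in> borel_measurable borel" "0 < (INF x. g x)" "bdd_below (range g)"
    "Lfun M K g < \<infinity>" "Vfun M K g < \<infinity>"
    using assms(7) unfolding A3_def by auto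
  have gm: "g \<in> borel_measurable M"
  proof -
    have eq: "measurable M (borel :: real measure) = measurable borel borel"
      by (rule measurable_cong_sets[OF assms(2) refl])
    show ?thesis unfolding eq by (rule gA(1))
  qed
  have gge: "\<And>x. (INF x. g x) \<le> g x" using gA(3) by (intro cINF_lower) auto
  have ex: "incseq En" "(\<Union>n. En n) = UNIV" "\<And>n. En n \<in> sets borel"
    using assms(8) unfolding exhausting_def by auto
  have Ens: "\<And>n. En n \<in> sets M" using ex(3) assms(2) by simp
  have Ecov: "\<And>x. \<exists>n. x \<in> En n" using ex(2) by blast
  show ?thesis
    using L_part[OF gm gA(2) gge gA(4) gA(5) Ens ex(1) Ecov assms(9)]
      V_part[OF gm gA(2) gge gA(4) gA(5) Ens ex(1) Ecov assms(9)] by blast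
qed

end
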